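(* Let $n\geq 8$ and $4\leq k\leq n-4$. An $n$-tournament is $k$-skew-spectrally monomorphic if and only if it is switching equivalent to a transitive tournament.
   Context: An $n$-tournament is a digraph on vertex set $V$, $|V|=n$, in which every pair of distinct vertices is joined by exactly one arc. Its adjacency matrix $A=(a_{ij})$ has $a_{ij}=1$ if $v_i$ dominates $v_j$ and $0$ otherwise; its skew-adjacency matrix is $S=A-A^{\top}$. A tournament is $k$-skew-spectrally monomorphic if all $k\times k$ principal submatrices of $S$ have the same characteristic polynomial. A tournament is transitive if whenever $u$ dominates $v$ and $v$ dominates $w$, then $u$ dominates $w$. The switch of a tournament $T$ with respect to $X\subseteq V$ is the tournament obtained by reversing all arcs between $X$ and $V\setminus X$; two tournaments on the same vertex set are switching equivalent if one is a switch of the other. *)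

theory Defs
  imports "HOL-Computational_Algebra.Polynomial" "HOL-Combinatorics.Permutations"
begin

text \<open>A tournament on the finite vertex set V, given by the domination relation T
  (T u v means u dominates v); only arcs between vertices of V matter.\<close>
definition tournament :: "'a set \<Rightarrow> ('a \<Rightarrow> 'a \<Rightarrow> bool) \<Rightarrow> bool" where
  "tournament V T \<longleftrightarrow> finite V \<and> (\<forall>u\<in>V. \<not> T u u) \<and>
     (\<forall>u\<in>V. \<forall>v\<in>V. u \<noteq> v \<longrightarrow> (T u v \<longleftrightarrow> \<not> T v u))"

definition transitive_tournament :: "'a set \<Rightarrow> ('a \<Rightarrow> 'a \<Rightarrow> bool) \<Rightarrow> bool" where
  "transitive_tournament V T \<longleftrightarrow> tournament V T \<and>
     (\<forall>u\<in>V. \<forall>v\<in>V. \<forall>w\<in>V. T u v \<and> T v w \<longrightarrow> T u w)"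

definition skew_adj :: "('a \<Rightarrow> 'a \<Rightarrow> bool) \<Rightarrow> 'a \<Rightarrow> 'a \<Rightarrow> int" where
  "skew_adj T u v = (if T u v then 1 else 0) - (if T v u then 1 else 0)"

text \<open>Characteristic polynomial det(x I - M_X) of the principal submatrix of M
  indexed by the finite set X (Leibniz expansion of the determinant).\<close>
definition principal_charpoly :: "('a \<Rightarrow> 'a \<Rightarrow> int) \<Rightarrow> 'a set \<Rightarrow> int poly" where
  "principal_charpoly M X =
     (\<Sum>p\<in>{p. p permutes X}. of_int (sign p) *
        (\<Prod>i\<in>X. (if i = p i then [:0, 1:] else 0) - [:M i (p i):]))"

definition skew_spectrally_monomorphic :: "nat \<Rightarrow> 'a set \<Rightarrow> ('a \<Rightarrow> 'a \<Rightarrow> bool) \<Rightarrow> bool" where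
  "skew_spectrally_monomorphic k V T \<longleftrightarrow>
     (\<forall>X Y. X \<subseteq> V \<longrightarrow> Y \<subseteq> V \<longrightarrow> card X = k \<longrightarrow> card Y = k \<longrightarrow>
        principal_charpoly (skew_adj T) X = principal_charpoly (skew_adj T) Y)"

definition switch :: "('a \<Rightarrow> 'a \<Rightarrow> bool) \<Rightarrow> 'a set \<Rightarrow> 'a \<Rightarrow> 'a \<Rightarrow> bool" where
  "switch T X u v = (if (u \<in> X) = (v \<in> X) then T u v else T v u)"

definition switching_equivalent :: "'a set \<Rightarrow> ('a \<Rightarrow> 'a \<Rightarrow> bool) \<Rightarrow> ('a \<Rightarrow> 'a \<Rightarrow> bool) \<Rightarrow> bool" where
  "switching_equivalent V T T' \<longleftrightarrow>
     (\<exists>X\<subseteq>V. \<forall>u\<in>V. \<forall>v\<in>V. T' u v = switch T X u v)"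

end

theory Submission
  imports Defs
begin

definition LL :: "('a \<Rightarrow> 'a \<Rightarrow> int) \<Rightarrow> 'a set \<Rightarrow> int" where
 "LL M J = (\<Sum>p\<in>{p. p permutes J}. sign p * (\<Prod>i\<in>J. - M i (p i)))"

lemma LL_empty: "LL M {} = 1"
  by (simp add: LL_def)

lemma LL_insert:
  assumes fS: "finite S" and aS: "a \<notin> S"
  shows "LL M (insert a S) = (\<Sum>b\<in>insert a S. (if a = b then 1 else -1) * (- M a b) *
            LL (\<lambda>i j. M i (transpose a b j)) S)"
proof -
  have "LL M (insert a S) = (\<Sum>b\<in>insert a S. \<Sum>q\<in>{p. p permutes S}.
          sign (transpose a b \<circ> q) * (\<Prod>i\<in>insert a S. - M i ((transpose a b \<circ> q) i)))"
    unfolding LL_def by (rule sum_over_permutations_insert[OF fS aS])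
  also have "\<dots> = (\<Sum>b\<in>insert a S. \<Sum>q\<in>{p. p permutes S}.
          (if a = b then 1 else -1) * (- M a b) * (sign q * (\<Prod>i\<in>S. - M i (transpose a b (q i)))))"
  proof (intro sum.cong refl)
    fix b q assume q: "q \<in> {p. p permutes S}"
    then have qp: "q permutes S" by simp
    have perm: "permutation q" using qp fS permutation_permutes by blast
    have qa: "q a = a" using qp aS permutes_not_in by metis
    have "sign (transpose a b \<circ> q) = (if a = b then 1 else -1) * sign q"
      by (simp add: sign_compose perm sign_swap_id permutation_swap_id)
    moreover have "(\<Prod>i\<in>insert a S. - M i ((transpose a b \<circ> q) i)) = (- M a b) * (\<Prod>i\<in>S. - M i (transpose a b (q i)))"
      unfolding prod.insert[OF fS aS] using qa by (simp add: o_def)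
    ultimately show "sign (transpose a b \<circ> q) * (\<Prod>i\<in>insert a S. - M i ((transpose a b \<circ> q) i)) =
          (if a = b then 1 else -1) * (- M a b) * (sign q * (\<Prod>i\<in>S. - M i (transpose a b (q i))))"
      by (simp only: ac_simps)
  qed
  also have "\<dots> = (\<Sum>b\<in>insert a S. (if a = b then 1 else -1) * (- M a b) *
            LL (\<lambda>i j. M i (transpose a b j)) S)"
    unfolding LL_def by (simp add: sum_distrib_left mult.assoc)
  finally show ?thesis .
qed

lemma LL4:
  assumes d: "distinct [a,b,c,d]" and z: "\<And>x. M x x = 0" and sk: "\<And>x y. M y x = - M x y"
  shows "LL M {a,b,c,d} = (M a b * M c d - M a c * M b d + M a d * M b c)^2"
proof -
  have f1: "finite {b,c,d}" "a \<notin> {b,c,d}" using d by auto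
  have f2: "finite {c,d}" "b \<notin> {c,d}" using d by auto
  have f3: "finite {d}" "c \<notin> {d}" using d by auto
  have f4: "finite {}" "d \<notin> {}" by auto
  have ne: "a\<noteq>b" "a\<noteq>c" "a\<noteq>d" "b\<noteq>c" "b\<noteq>d" "c\<noteq>d" "b\<noteq>a" "c\<noteq>a" "d\<noteq>a" "c\<noteq>b" "d\<noteq>b" "d\<noteq>c" using d by auto
  have sba: "M b a = - M a b" "M c a = - M a c" "M d a = - M a d" "M c b = - M b c" "M d b = - M b d" "M d c = - M c d"
    by (rule sk)+
  show ?thesis
    unfolding LL_insert[OF f1] LL_insert[OF f2] LL_insert[OF f3] LL_insert[OF f4] LL_empty
    using ne
    apply (simp add: transpose_def z sba)
    apply (simp add: algebra_simps power2_eq_square)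
    done
qed

lemma perm_fix_eq:
  assumes "S \<subseteq> X"
  shows "{p. p permutes X \<and> (\<forall>i\<in>S. p i = i)} = {p. p permutes (X - S)}"
proof (intro set_eqI iffI; simp)
  fix p assume p: "p permutes X \<and> (\<forall>i\<in>S. p i = i)"
  then show "p permutes X - S" unfolding permutes_def by auto
next
  fix p assume p: "p permutes X - S"
  then have "p permutes X" by (rule permutes_subset) auto
  moreover have "\<forall>i\<in>S. p i = i" using p permutes_not_in by fastforce
  ultimately show "p permutes X \<and> (\<forall>i\<in>S. p i = i)" by simp
qed

lemma charpoly_expand:
  assumes fX: "finite X"
  shows "principal_charpoly M X = (\<Sum>S\<in>Pow X. [:0,1:]^card S * [: LL M (X - S) :])"
proof -
  let ?f1 = "\<lambda>p i. (if i = p i then [:0, 1:] else 0) :: int poly"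
  let ?f2 = "\<lambda>p i. - [:M i (p i):]"
  let ?P = "{p. p permutes X}"
  have "principal_charpoly M X = (\<Sum>p\<in>?P. of_int (sign p) * (\<Prod>i\<in>X. ?f1 p i + ?f2 p i))"
    unfolding principal_charpoly_def by (simp add: diff_conv_add_uminus)
  also have "\<dots> = (\<Sum>p\<in>?P. \<Sum>S\<in>Pow X. (if (\<forall>i\<in>S. p i = i) then [:0,1:]^card S * [: sign p * (\<Prod>i\<in>X - S. - M i (p i)) :] else 0))"
  proof (rule sum.cong[OF refl])
    fix p assume "p \<in> ?P"
    have "of_int (sign p) * (\<Prod>i\<in>X. ?f1 p i + ?f2 p i) = (\<Sum>S\<in>Pow X. of_int (sign p) * ((\<Prod>i\<in>S. ?f1 p i) * (\<Prod>i\<in>X - S. ?f2 p i)))"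
      unfolding prod_add[OF fX] sum_distrib_left ..
    also have "\<dots> = (\<Sum>S\<in>Pow X. (if (\<forall>i\<in>S. p i = i) then [:0,1:]^card S * [: sign p * (\<Prod>i\<in>X - S. - M i (p i)) :] else 0))"
    proof (rule sum.cong[OF refl])
      fix S assume S: "S \<in> Pow X"
      have fS: "finite S" using S fX finite_subset by auto
      have p2: "(\<Prod>i\<in>X - S. ?f2 p i) = [: \<Prod>i\<in>X - S. - M i (p i) :]"
        by (simp add: prod_to_poly[symmetric])
      show "of_int (sign p) * ((\<Prod>i\<in>S. ?f1 p i) * (\<Prod>i\<in>X - S. ?f2 p i)) =
         (if (\<forall>i\<in>S. p i = i) then [:0,1:]^card S * [: sign p * (\<Prod>i\<in>X - S. - M i (p i)) :] else 0)"
      proof (cases "\<forall>i\<in>S. p i = i")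
        case True
        then have "(\<Prod>i\<in>S. ?f1 p i) = (\<Prod>i\<in>S. [:0,1:])" by (intro prod.cong) auto
        then have "(\<Prod>i\<in>S. ?f1 p i) = [:0,1:]^card S" by simp
        then show ?thesis using True p2 by (simp add: of_int_poly ac_simps)
      next
        case False
        then obtain i where "i \<in> S" "p i \<noteq> i" by auto
        then have "(\<Prod>i\<in>S. ?f1 p i) = 0" using fS by (intro prod_zero) (auto intro!: bexI[of _ i])
        then show ?thesis using False by auto
      qed
    qed
    finally show "of_int (sign p) * (\<Prod>i\<in>X. ?f1 p i + ?f2 p i) = (\<Sum>S\<in>Pow X. (if (\<forall>i\<in>S. p i = i) then [:0,1:]^card S * [: sign p * (\<Prod>i\<in>X - S. - M i (p i)) :] else 0))" .
  qed
  also have "\<dots> = (\<Sum>S\<in>Pow X. \<Sum>p\<in>?P. (if (\<forall>i\<in>S. p i = i) then [:0,1:]^card S * [: sign p * (\<Prod>i\<in>X - S. - M i (p i)) :] else 0))"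
    by (rule sum.swap)
  also have "\<dots> = (\<Sum>S\<in>Pow X. [:0,1:]^card S * [: LL M (X - S) :])"
  proof (rule sum.cong[OF refl])
    fix S assume S: "S \<in> Pow X"
    have fP: "finite ?P" using fX by (rule finite_permutations)
    have "(\<Sum>p\<in>?P. (if (\<forall>i\<in>S. p i = i) then [:0,1:]^card S * [: sign p * (\<Prod>i\<in>X - S. - M i (p i)) :] else 0))
        = (\<Sum>p\<in>{p\<in>?P. \<forall>i\<in>S. p i = i}. [:0,1:]^card S * [: sign p * (\<Prod>i\<in>X - S. - M i (p i)) :])"
      by (rule sum.inter_filter[symmetric, OF fP])
    also have "{p\<in>?P. \<forall>i\<in>S. p i = i} = {p. p permutes (X - S)}"
      using perm_fix_eq[of S X] S by auto
    also have "(\<Sum>p\<in>{p. p permutes (X - S)}. [:0,1:]^card S * [: sign p * (\<Prod>i\<in>X - S. - M i (p i)) :])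
        = [:0,1:]^card S * [: LL M (X - S) :]"
      unfolding LL_def by (simp add: sum_distrib_left sum_to_poly[symmetric])
    finally show "(\<Sum>p\<in>?P. (if (\<forall>i\<in>S. p i = i) then [:0,1:]^card S * [: sign p * (\<Prod>i\<in>X - S. - M i (p i)) :] else 0))
        = [:0,1:]^card S * [: LL M (X - S) :]" .
  qed
  finally show ?thesis .
qed


lemma coeff_charpoly4:
  assumes fX: "finite X" and c4: "4 \<le> card X"
  shows "coeff (principal_charpoly M X) (card X - 4) = (\<Sum>J\<in>{J. J \<subseteq> X \<and> card J = 4}. LL M J)"
proof -
  have "coeff (principal_charpoly M X) (card X - 4) = (\<Sum>S\<in>Pow X. if card S = card X - 4 then LL M (X - S) else 0)"
    unfolding charpoly_expand[OF fX] coeff_sum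
  proof (rule sum.cong[OF refl])
    fix S
    have "[:0,1:]^card S * [: LL M (X - S) :] = monom (LL M (X - S)) (card S)"
      by (simp add: monom_altdef)
    then show "coeff ([:0,1:]^card S * [: LL M (X - S) :]) (card X - 4) = (if card S = card X - 4 then LL M (X - S) else 0)"
      by simp
  qed
  also have "\<dots> = (\<Sum>S\<in>{S\<in>Pow X. card S = card X - 4}. LL M (X - S))"
    by (rule sum.inter_filter[symmetric]) (use fX in simp)
  also have "\<dots> = (\<Sum>J\<in>{J. J \<subseteq> X \<and> card J = 4}. LL M J)"
  proof (rule sum.reindex_bij_witness[of _ "\<lambda>J. X - J" "\<lambda>S. X - S"])
    fix S assume "S \<in> {S\<in>Pow X. card S = card X - 4}"
    then show "X - (X - S) = S" by auto
  next
    fix S assume S: "S \<in> {S\<in>Pow X. card S = card X - 4}"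
    then have "card (X - S) = 4" using fX c4 by (auto simp: card_Diff_subset finite_subset)
    then show "X - S \<in> {J. J \<subseteq> X \<and> card J = 4}" by auto
  next
    fix J assume "J \<in> {J. J \<subseteq> X \<and> card J = 4}"
    then show "X - (X - J) = J" by auto
  next
    fix J assume J: "J \<in> {J. J \<subseteq> X \<and> card J = 4}"
    then have "card (X - J) = card X - 4" using fX by (auto simp: card_Diff_subset finite_subset)
    then show "X - J \<in> {S\<in>Pow X. card S = card X - 4}" by auto
  next
    fix S assume "S \<in> {S\<in>Pow X. card S = card X - 4}"
    show "LL M (X - S) = LL M (X - S)" ..
  qed
  finally show ?thesis .
qed



definition upsum :: "('a set \<Rightarrow> int) \<Rightarrow> nat \<Rightarrow> 'a set \<Rightarrow> int" where
  "upsum g t X = (\<Sum>T\<in>{T. T \<subseteq> X \<and> card T = t}. g T)"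

lemma upsum_insert:
  assumes fZ: "finite Z" and aZ: "a \<notin> Z"
  shows "upsum g (Suc t) (insert a Z) = upsum g (Suc t) Z + upsum (\<lambda>T. g (insert a T)) t Z"
proof -
  have eq: "{T. T \<subseteq> insert a Z \<and> card T = Suc t} =
     {T. T \<subseteq> Z \<and> card T = Suc t} \<union> insert a ` {T. T \<subseteq> Z \<and> card T = t}"
  proof (intro set_eqI iffI)
    fix T assume T: "T \<in> {T. T \<subseteq> insert a Z \<and> card T = Suc t}"
    show "T \<in> {T. T \<subseteq> Z \<and> card T = Suc t} \<union> insert a ` {T. T \<subseteq> Z \<and> card T = t}"
    proof (cases "a \<in> T")
      case True
      have fT: "finite T" using T fZ finite_subset by auto
      have "T = insert a (T - {a})" using True by auto
      moreover have "T - {a} \<subseteq> Z" "card (T - {a}) = t" using T True fT by auto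
      ultimately show ?thesis by blast
    next
      case False
      then show ?thesis using T by auto
    qed
  next
    fix T assume T: "T \<in> {T. T \<subseteq> Z \<and> card T = Suc t} \<union> insert a ` {T. T \<subseteq> Z \<and> card T = t}"
    then show "T \<in> {T. T \<subseteq> insert a Z \<and> card T = Suc t}"
    proof
      assume "T \<in> {T. T \<subseteq> Z \<and> card T = Suc t}" then show ?thesis by auto
    next
      assume "T \<in> insert a ` {T. T \<subseteq> Z \<and> card T = t}"
      then obtain U where U: "U \<subseteq> Z" "card U = t" "T = insert a U" by auto
      have "finite U" using U fZ finite_subset by auto
      moreover have "a \<notin> U" using U aZ by auto
      ultimately show ?thesis using U by auto
    qed
  qed
  have fin1: "finite {T. T \<subseteq> Z \<and> card T = Suc t}" using fZ by simp
  have fin2: "finite {T. T \<subseteq> Z \<and> card T = t}" using fZ by simp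
  have disj: "{T. T \<subseteq> Z \<and> card T = Suc t} \<inter> insert a ` {T. T \<subseteq> Z \<and> card T = t} = {}"
    using aZ by auto
  have inj: "inj_on (insert a) {T. T \<subseteq> Z \<and> card T = t}"
    using aZ by (auto simp: inj_on_def)
  show ?thesis
    unfolding upsum_def eq
    by (simp add: sum.union_disjoint[OF fin1 finite_imageI[OF fin2] disj] sum.reindex[OF inj])
qed

lemma upsum_const:
  assumes fZ: "finite Z" and c: "\<And>T. T \<subseteq> Z \<Longrightarrow> card T = t \<Longrightarrow> g T = c"
  shows "upsum g t Z = of_nat (card Z choose t) * c"
proof -
  have "upsum g t Z = (\<Sum>T\<in>{T. T \<subseteq> Z \<and> card T = t}. c)"
    unfolding upsum_def by (rule sum.cong) (auto simp: c)
  also have "\<dots> = of_nat (card Z choose t) * c" using n_subsets[OF fZ, of t] by simp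
  finally show ?thesis .
qed

lemma const_upsum:
  fixes g :: "'a set \<Rightarrow> int"
  assumes "finite V" "t \<le> k" "k + t \<le> card V"
    "\<And>X Y. X \<subseteq> V \<Longrightarrow> Y \<subseteq> V \<Longrightarrow> card X = k \<Longrightarrow> card Y = k \<Longrightarrow> upsum g t X = upsum g t Y"
    "A \<subseteq> V" "B \<subseteq> V" "card A = t" "card B = t"
  shows "g A = g B"
  using assms
proof (induction t arbitrary: V g k A B)
  case 0
  have "finite A" "finite B" using 0 finite_subset by auto
  then have "A = {}" "B = {}" using 0 by auto
  then show ?case by simp
next
  case (Suc t)
  note fV = Suc.prems(1)
  have exch: "g (insert a W) = g (insert b W)"
    if W: "W \<subseteq> V" "card W = t" and a: "a \<in> V" "a \<notin> W" and b: "b \<in> V" "b \<notin> W" for W a b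
  proof (cases "a = b")
    case True then show ?thesis by simp
  next
    case ab: False
    define V' where "V' = V - {a, b}"
    define g' where "g' = (\<lambda>T. g (insert a T) - g (insert b T))"
    have fV': "finite V'" using fV V'_def by auto
    have cV': "card V' = card V - 2" using a b ab fV unfolding V'_def
      by (simp add: card_Diff_subset)
    have k1: "1 \<le> k" using Suc.prems(2) by simp
    have zero: "upsum g' t Z = 0" if Z: "Z \<subseteq> V'" "card Z = k - 1" for Z
    proof -
      have fZ: "finite Z" using Z fV' finite_subset by auto
      have aZ: "a \<notin> Z" "b \<notin> Z" using Z V'_def by auto
      have "upsum g (Suc t) (insert a Z) = upsum g (Suc t) (insert b Z)"
        using Suc.prems(4)[of "insert a Z" "insert b Z"] Z aZ fZ a b k1 V'_def by auto
      then have "upsum g (Suc t) Z + upsum (\<lambda>T. g (insert a T)) t Z = upsum g (Suc t) Z + upsum (\<lambda>T. g (insert b T)) t Z"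
        by (simp only: upsum_insert[OF fZ aZ(1)] upsum_insert[OF fZ aZ(2)])
      then show ?thesis
        unfolding g'_def upsum_def by (simp add: sum_subtractf)
    qed
    have WV': "W \<subseteq> V'" using W a b V'_def by auto
    have "g' W = 0"
    proof -
      have const: "g' T = g' W" if "T \<subseteq> V'" "card T = t" for T
        using Suc.IH[of V' "k - 1" g' T W] Suc.prems(2,3) fV' cV' zero that WV' W
        by fastforce
      have "\<exists>Z. W \<subseteq> Z \<and> Z \<subseteq> V' \<and> card Z = k - 1"
        by (rule exists_subset_between) (use W WV' fV' cV' Suc.prems(2,3) in auto)
      then obtain Z where Z: "W \<subseteq> Z" "Z \<subseteq> V'" "card Z = k - 1" by blast
      have fZ: "finite Z" using Z fV' finite_subset by auto
      have "upsum g' t Z = of_nat (card Z choose t) * g' W"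
        using upsum_const[OF fZ, of t g' "g' W"] const Z by auto
      moreover have "card Z choose t > 0" using Z Suc.prems(2) by simp
      ultimately show ?thesis using zero[OF Z(2,3)] by simp
    qed
    then show ?thesis unfolding g'_def by simp
  qed
  have BV: "B \<subseteq> V" and cB: "card B = Suc t" using Suc.prems by auto
  have main: "\<And>m A. card (A - B) = m \<Longrightarrow> A \<subseteq> V \<Longrightarrow> card A = Suc t \<Longrightarrow> g A = g B"
  proof -
    fix m show "\<And>A. card (A - B) = m \<Longrightarrow> A \<subseteq> V \<Longrightarrow> card A = Suc t \<Longrightarrow> g A = g B"
    proof (induction m)
      case 0
      have fA: "finite A" "finite B" using 0 Suc.prems fV finite_subset by auto
      then have "A \<subseteq> B" using 0 by auto
      then show ?case using fA 0 Suc.prems(8) by (metis card_subset_eq)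
    next
      case (Suc m)
      have fA: "finite A" "finite B" using Suc.prems(2) fV finite_subset BV by auto
      obtain a where a: "a \<in> A" "a \<notin> B" using Suc.prems(1) by (metis card.empty Diff_eq_empty_iff nat.distinct(1) subsetI)
      have "B - A \<noteq> {}"
      proof
        assume "B - A = {}"
        then have "B \<subseteq> A" by auto
        then have "B = A" using fA Suc.prems(3) cB by (metis card_subset_eq)
        then show False using a by simp
      qed
      then obtain b where b: "b \<in> B" "b \<notin> A" by auto
      define W where "W = A - {a}"
      have W: "W \<subseteq> V" "card W = t" "a \<notin> W" "b \<notin> W" using W_def Suc.prems a b fA by auto
      have "g A = g (insert a W)" using W_def a by (simp add: insert_absorb)
      have aV: "a \<in> V" using a Suc.prems(2) by blast
      have bV: "b \<in> V" using b BV by blast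
      have "g A = g (insert a W)" using W_def a by (simp add: insert_absorb)
      also have "\<dots> = g (insert b W)"
        by (rule exch[OF W(1,2) aV W(3) bV W(4)])
      also have "\<dots> = g B"
      proof (rule Suc.IH)
        have "insert b W - B = (A - B) - {a}" using W_def a b by auto
        then show "card (insert b W - B) = m" using Suc.prems(1) a fA by simp
        show "insert b W \<subseteq> V" using W bV by auto
        show "card (insert b W) = Suc t" using W fA W_def by simp
      qed
      finally show ?case .
    qed
  qed
  show ?case using main Suc.prems by blast
qed


lemma charpoly_cong:
  assumes "\<And>i j. i \<in> X \<Longrightarrow> j \<in> X \<Longrightarrow> M' i j = M i j"
  shows "principal_charpoly M' X = principal_charpoly M X"
  unfolding principal_charpoly_def
proof (rule sum.cong[OF refl])
  fix p assume "p \<in> {p. p permutes X}"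
  then have "p permutes X" by simp
  then have "\<And>i. i \<in> X \<Longrightarrow> p i \<in> X" by (simp add: permutes_in_image)
  then show "of_int (sign p) * (\<Prod>i\<in>X. (if i = p i then [:0, 1:] else 0) - [:M' i (p i):]) =
             of_int (sign p) * (\<Prod>i\<in>X. (if i = p i then [:0, 1:] else 0) - [:M i (p i):])"
    using assms by (intro arg_cong2[where f="(*)"] refl prod.cong) auto
qed

lemma charpoly_diag_conj:
  fixes e :: "'a \<Rightarrow> int"
  assumes M': "\<And>u v. M' u v = e u * e v * M u v" and e: "\<And>u. e u * e u = 1"
  shows "principal_charpoly M' X = principal_charpoly M X"
  unfolding principal_charpoly_def
proof (rule sum.cong[OF refl])
  fix p assume "p \<in> {p. p permutes X}"
  then have p: "p permutes X" by simp
  have fac: "(if i = p i then [:0, 1:] else 0) - [:M' i (p i):] =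
        [:e i * e (p i):] * ((if i = p i then [:0, 1:] else 0) - [:M i (p i):])" for i
  proof (cases "i = p i")
    case True
    then have "e i * e (p i) = 1" using e by metis
    then show ?thesis using True M' by (simp add: algebra_simps)
  next
    case False
    then show ?thesis using M' by (simp add: algebra_simps)
  qed
  have "(\<Prod>i\<in>X. e i * e (p i)) = (\<Prod>i\<in>X. e i) * (\<Prod>i\<in>X. e (p i))"
    by (simp add: prod.distrib)
  also have "(\<Prod>i\<in>X. e (p i)) = (\<Prod>i\<in>X. e i)"
    using prod.permute[OF p, of e] by (simp add: o_def)
  also have "(\<Prod>i\<in>X. e i) * (\<Prod>i\<in>X. e i) = (\<Prod>i\<in>X. e i * e i)"
    by (simp add: prod.distrib)
  also have "\<dots> = 1" using e by simp
  finally have one: "(\<Prod>i\<in>X. e i * e (p i)) = 1" .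
  have "(\<Prod>i\<in>X. (if i = p i then [:0, 1:] else 0) - [:M' i (p i):]) =
        (\<Prod>i\<in>X. [:e i * e (p i):]) * (\<Prod>i\<in>X. (if i = p i then [:0, 1:] else 0) - [:M i (p i):])"
    unfolding fac by (rule prod.distrib)
  also have "(\<Prod>i\<in>X. [:e i * e (p i):]) = 1"
    unfolding prod_to_poly one by (simp add: one_pCons)
  finally show "of_int (sign p) * (\<Prod>i\<in>X. (if i = p i then [:0, 1:] else 0) - [:M' i (p i):]) =
             of_int (sign p) * (\<Prod>i\<in>X. (if i = p i then [:0, 1:] else 0) - [:M i (p i):])"
    by simp
qed

lemma skew_switch:
  "skew_adj (switch T Y) u v = (if u \<in> Y then -1 else 1) * (if v \<in> Y then -1 else 1) * skew_adj T u v"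
  unfolding skew_adj_def switch_def by auto

lemma charpoly_switch:
  "principal_charpoly (skew_adj (switch T Y)) X = principal_charpoly (skew_adj T) X"
  by (rule charpoly_diag_conj[OF skew_switch]) simp

lemma charpoly_iso:
  assumes f: "bij_betw f X Y" and fX: "finite X"
    and M: "\<And>i j. i \<in> X \<Longrightarrow> j \<in> X \<Longrightarrow> M' (f i) (f j) = M i j"
  shows "principal_charpoly M' Y = principal_charpoly M X"
proof -
  have inj: "inj_on f X" using f bij_betw_imp_inj_on by blast
  have Y: "Y = f ` X" using f bij_betw_imp_surj_on by metis
  have g: "bij_betw (inv_into X f) Y X" using f bij_betw_inv_into by blast
  have pX: "p i \<in> X" if "p permutes X" "i \<in> X" for p i using that by (simp add: permutes_in_image)
  have key: "of_int (sign (map_permutation X f p)) * (\<Prod>i\<in>Y. (if i = map_permutation X f p i then [:0, 1:] else 0) - [:M' i (map_permutation X f p i):]) =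
        of_int (sign p) * (\<Prod>i\<in>X. (if i = p i then [:0, 1:] else 0) - [:M i (p i):])"
    if p: "p permutes X" for p
  proof -
    let ?q = "map_permutation X f p"
    have sg: "sign ?q = sign p" by (rule sign_map_permutation[OF inj p fX])
    have qa: "?q (f i) = f (p i)" if "i \<in> X" for i
      by (rule map_permutation_apply[OF inj that])
    have "(\<Prod>i\<in>Y. (if i = ?q i then [:0, 1:] else 0) - [:M' i (?q i):]) =
          (\<Prod>i\<in>X. (if f i = ?q (f i) then [:0, 1:] else 0) - [:M' (f i) (?q (f i)):])"
      unfolding Y by (rule prod.reindex[OF inj, unfolded o_def])
    also have "\<dots> = (\<Prod>i\<in>X. (if i = p i then [:0, 1:] else 0) - [:M i (p i):])"
    proof (rule prod.cong[OF refl])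
      fix i assume i: "i \<in> X"
      have "(f i = f (p i)) = (i = p i)" using inj i pX[OF p i] by (auto simp: inj_on_def)
      then show "(if f i = ?q (f i) then [:0, 1:] else 0) - [:M' (f i) (?q (f i)):] =
            (if i = p i then [:0, 1:] else 0) - [:M i (p i):]"
        using qa[OF i] M[OF i pX[OF p i]] by simp
    qed
    finally show ?thesis using sg by simp
  qed
  show ?thesis
    unfolding principal_charpoly_def
  proof (rule sym, rule sum.reindex_bij_witness[of _ "map_permutation Y (inv_into X f)" "map_permutation X f"])
    fix p assume "p \<in> {p. p permutes X}"
    then have p: "p permutes X" by simp
    show "map_permutation Y (inv_into X f) (map_permutation X f p) = p"
      by (rule map_permutation_compose_inv[OF f p]) (use inj in \<open>auto\<close>)
  next
    fix p assume "p \<in> {p. p permutes X}"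
    then have p: "p permutes X" by simp
    show "map_permutation X f p \<in> {p. p permutes Y}"
      using map_permutation_permutes[OF f p] by simp
  next
    fix q assume "q \<in> {p. p permutes Y}"
    then have q: "q permutes Y" by simp
    show "map_permutation X f (map_permutation Y (inv_into X f) q) = q"
      by (rule map_permutation_compose_inv[OF g q]) (use f in \<open>auto simp: Y f_inv_into_f\<close>)
  next
    fix q assume "q \<in> {p. p permutes Y}"
    then have q: "q permutes Y" by simp
    show "map_permutation Y (inv_into X f) q \<in> {p. p permutes X}"
      using map_permutation_permutes[OF g q] by simp
  next
    fix p assume "p \<in> {p. p permutes X}"
    then show "of_int (sign (map_permutation X f p)) * (\<Prod>i\<in>Y. (if i = map_permutation X f p i then [:0, 1:] else 0) - [:M' i (map_permutation X f p i):]) =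
        of_int (sign p) * (\<Prod>i\<in>X. (if i = p i then [:0, 1:] else 0) - [:M i (p i):])"
      using key by simp
  qed
qed


lemma skew_val:
  assumes "tournament V T" "a \<in> V" "b \<in> V" "T a b"
  shows "skew_adj T a b = 1"
proof -
  have irr: "\<not> T a a" using assms(1,2) unfolding tournament_def by blast
  then have ab: "a \<noteq> b" using assms(4) by blast
  have "T a b \<longleftrightarrow> \<not> T b a" using assms(1,2,3) ab unfolding tournament_def by blast
  then show ?thesis using assms(4) by (simp add: skew_adj_def)
qed

lemma switch_tournament:
  assumes "tournament V T"
  shows "tournament V (switch T Y)"
proof -
  have f: "finite V" and irr: "\<forall>u\<in>V. \<not> T u u"
    and tot: "\<forall>u\<in>V. \<forall>v\<in>V. u \<noteq> v \<longrightarrow> (T u v \<longleftrightarrow> \<not> T v u)"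
    using assms unfolding tournament_def by blast+
  have "\<forall>u\<in>V. \<not> switch T Y u u" using irr unfolding switch_def by simp
  moreover have "\<forall>u\<in>V. \<forall>v\<in>V. u \<noteq> v \<longrightarrow> (switch T Y u v \<longleftrightarrow> \<not> switch T Y v u)"
  proof (intro ballI impI)
    fix u v assume uv: "u \<in> V" "v \<in> V" "u \<noteq> v"
    have t1: "T u v \<longleftrightarrow> \<not> T v u" using tot uv by blast
    show "switch T Y u v \<longleftrightarrow> \<not> switch T Y v u"
      unfolding switch_def using t1 by (cases "u \<in> Y"; cases "v \<in> Y") simp_all
  qed
  ultimately show ?thesis using f unfolding tournament_def by blast
qed

lemma transitive_charpoly_canon:
  assumes tt: "transitive_tournament V T" and XV: "X \<subseteq> V" and cX: "card X = k"
  shows "principal_charpoly (skew_adj T) X =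
    principal_charpoly (\<lambda>i j. (if i < j then 1 else 0) - (if j < i then 1 else 0)) {0..<k}"
proof -
  have tour: "tournament V T" and tr: "\<And>u v w. u \<in> V \<Longrightarrow> v \<in> V \<Longrightarrow> w \<in> V \<Longrightarrow> T u v \<Longrightarrow> T v w \<Longrightarrow> T u w"
    using tt unfolding transitive_tournament_def by blast+
  have fV: "finite V" and irr: "\<And>u. u \<in> V \<Longrightarrow> \<not> T u u"
    and tot: "\<And>u v. u \<in> V \<Longrightarrow> v \<in> V \<Longrightarrow> u \<noteq> v \<Longrightarrow> T u v \<longleftrightarrow> \<not> T v u"
    using tour unfolding tournament_def by blast+
  have fX: "finite X" using fV XV finite_subset by auto
  define r where "r u = card {w\<in>X. T w u}" for u
  have mono: "r u < r w" if "u \<in> X" "w \<in> X" "T u w" for u w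
  proof -
    have "{w'\<in>X. T w' u} \<subset> {w'\<in>X. T w' w}"
    proof
      show "{w'\<in>X. T w' u} \<subseteq> {w'\<in>X. T w' w}" using tr that XV by blast
      show "{w'\<in>X. T w' u} \<noteq> {w'\<in>X. T w' w}" using that irr XV by blast
    qed
    then show ?thesis unfolding r_def using fX by (intro psubset_card_mono) auto
  qed
  have inj: "inj_on r X"
  proof (rule inj_onI)
    fix u w assume uw: "u \<in> X" "w \<in> X" "r u = r w"
    show "u = w"
    proof (rule ccontr)
      assume ne: "u \<noteq> w"
      have "u \<in> V" "w \<in> V" using uw XV by auto
      then have "T u w \<or> T w u" using tot[of u w] ne by blast
      then show False using mono[OF uw(1,2)] mono[OF uw(2,1)] uw(3) by auto
    qed
  qed
  have rng: "r u < k" if "u \<in> X" for u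
  proof -
    have "{w\<in>X. T w u} \<subseteq> X - {u}" using irr that XV by auto
    then have "r u \<le> card (X - {u})" unfolding r_def using fX by (intro card_mono) auto
    moreover have "card (X - {u}) = k - 1" using that cX fX by (simp add: card_Diff_singleton)
    moreover have "k > 0" using that cX fX card_gt_0_iff by blast
    ultimately show ?thesis by linarith
  qed
  have bij: "bij_betw r X {0..<k}"
  proof -
    have "r ` X \<subseteq> {0..<k}" using rng by auto
    moreover have "card (r ` X) = card {0..<k}" using card_image[OF inj] cX by simp
    ultimately have "r ` X = {0..<k}" by (intro card_subset_eq) auto
    then show ?thesis using inj unfolding bij_betw_def by simp
  qed
  show ?thesis
  proof (rule sym, rule charpoly_iso[OF bij fX])
    fix i j assume ij: "i \<in> X" "j \<in> X"
    show "(if r i < r j then 1 else 0) - (if r j < r i then 1 else 0) = skew_adj T i j"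
    proof (cases "i = j")
      case True then show ?thesis by (simp add: skew_adj_def)
    next
      case False
      then have "T i j \<and> \<not> T j i \<or> T j i \<and> \<not> T i j" using tot ij XV by blast
      then show ?thesis using mono[OF ij] mono[OF ij(2,1)] by (auto simp: skew_adj_def)
    qed
  qed
qed

lemma triangle_trans:
  assumes "\<And>x y'. x \<in> {u,w,z,y} \<Longrightarrow> y' \<in> {u,w,z,y} \<Longrightarrow> x \<noteq> y' \<Longrightarrow> T x y' \<longleftrightarrow> \<not> T y' x"
    and d: "distinct [u,w,z,y]" and c: "T u w" "T w z" "T z u"
  shows "\<exists>a b c. distinct [a,b,c] \<and> {a,b,c} \<subseteq> {u,w,z,y} \<and> T a b \<and> T b c \<and> T a c"
proof -
  have o: "T y x \<or> T x y" if x: "x \<in> {u,w,z}" for x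
  proof -
    have "y \<noteq> x" "y \<in> {u,w,z,y}" "x \<in> {u,w,z,y}" using x d by auto
    then show ?thesis using assms(1)[of y x] by blast
  qed
  show ?thesis
  proof (cases "T y u")
    case yu: True
    show ?thesis
    proof (cases "T y w")
      case True then show ?thesis using yu c d by (intro exI[of _ y] exI[of _ u] exI[of _ w]) auto
    next
      case wy: False
      then have "T w y" using o by auto
      show ?thesis
      proof (cases "T y z")
        case True then show ?thesis using yu c d by (intro exI[of _ y] exI[of _ z] exI[of _ u]) auto
      next
        case False then have "T z y" using o by auto
        then show ?thesis using \<open>T w y\<close> c d by (intro exI[of _ w] exI[of _ z] exI[of _ y]) auto
      qed
    qed
  next
    case uy: False
    then have uy: "T u y" using o by auto
    show ?thesis
    proof (cases "T y w")
      case yw: True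
      show ?thesis
      proof (cases "T y z")
        case True then show ?thesis using yw c d by (intro exI[of _ y] exI[of _ w] exI[of _ z]) auto
      next
        case False then have "T z y" using o by auto
        then show ?thesis using uy c d by (intro exI[of _ z] exI[of _ u] exI[of _ y]) auto
      qed
    next
      case False then have "T w y" using o by auto
      then show ?thesis using uy c d by (intro exI[of _ u] exI[of _ w] exI[of _ y]) auto
    qed
  qed
qed

theorem proposition5p1:
  fixes V :: "'a set" and T :: "'a \<Rightarrow> 'a \<Rightarrow> bool" and n k :: nat
  assumes "tournament V T" and "card V = n" and "n \<ge> 8" and "4 \<le> k" and "k \<le> n - 4"
  shows "skew_spectrally_monomorphic k V T \<longleftrightarrow>
           (\<exists>T'. transitive_tournament V T' \<and> switching_equivalent V T T')"
proof
  assume mono: "skew_spectrally_monomorphic k V T"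
  have fV: "finite V" using assms(1) unfolding tournament_def by blast
  have "V \<noteq> {}" using assms(2,3) by auto
  then obtain v where vV: "v \<in> V" by blast
  define Y0 where "Y0 = {u\<in>V. T u v}"
  define T' where "T' = switch T Y0"
  have se: "switching_equivalent V T T'"
    unfolding switching_equivalent_def T'_def Y0_def by (intro exI[of _ "{u\<in>V. T u v}"]) auto
  have tour: "tournament V T'" unfolding T'_def by (rule switch_tournament[OF assms(1)])
  have irr: "\<And>u. u \<in> V \<Longrightarrow> \<not> T' u u"
    and tot: "\<And>u w. u \<in> V \<Longrightarrow> w \<in> V \<Longrightarrow> u \<noteq> w \<Longrightarrow> T' u w \<longleftrightarrow> \<not> T' w u"
    using tour unfolding tournament_def by blast+
  have src: "T' v u" if "u \<in> V" "u \<noteq> v" for u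
  proof -
    have "T v u \<longleftrightarrow> \<not> T u v" "\<not> T v v" using assms(1) that vV unfolding tournament_def by blast+
    then show ?thesis unfolding T'_def Y0_def switch_def using that vV by auto
  qed
  define M where "M = skew_adj T'"
  have Mv: "M v u = 1" if "u \<in> V" "u \<noteq> v" for u
    unfolding M_def using skew_val[OF tour vV that(1) src[OF that]] .
  have Mval: "M a b = 1" if "a \<in> V" "b \<in> V" "T' a b" for a b
    unfolding M_def using skew_val[OF tour that] .
  have Mz: "\<And>x. M x x = 0" and Msk: "\<And>x y. M y x = - M x y" unfolding M_def skew_adj_def by auto
  have LLc: "LL M A = LL M B" if "A \<subseteq> V" "B \<subseteq> V" "card A = 4" "card B = 4" for A B
  proof (rule const_upsum[OF fV assms(4) _ _ that])
    show "k + 4 \<le> card V" using assms by simp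
    fix X Y assume X: "X \<subseteq> V" and Y: "Y \<subseteq> V" and cX: "card X = k" and cY: "card Y = k"
    have fX: "finite X" and fY: "finite Y" using X Y fV finite_subset by auto
    have "upsum (LL M) 4 X = coeff (principal_charpoly M X) (k - 4)"
      using coeff_charpoly4[OF fX, of M] cX assms(4) unfolding upsum_def by simp
    also have "\<dots> = coeff (principal_charpoly (skew_adj T) X) (k - 4)"
      unfolding M_def T'_def charpoly_switch ..
    also have "\<dots> = coeff (principal_charpoly (skew_adj T) Y) (k - 4)"
      using mono X Y cX cY unfolding skew_spectrally_monomorphic_def by metis
    also have "\<dots> = coeff (principal_charpoly M Y) (k - 4)"
      unfolding M_def T'_def charpoly_switch ..
    also have "\<dots> = upsum (LL M) 4 Y"
      using coeff_charpoly4[OF fY, of M] cY assms(4) unfolding upsum_def by simp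
    finally show "upsum (LL M) 4 X = upsum (LL M) 4 Y" .
  qed
  have trans: "T' u z" if uwz: "u \<in> V" "w \<in> V" "z \<in> V" and h: "T' u w" "T' w z" for u w z
  proof (rule ccontr)
    assume nuz: "\<not> T' u z"
    have uw: "u \<noteq> w" using h irr uwz by auto
    have wz: "w \<noteq> z" using h irr uwz by auto
    have uz: "u \<noteq> z" using h tot[OF uwz(1,2) uw] by auto
    have zu: "T' z u" using nuz tot[OF uwz(3,1) uz[symmetric]] by blast
    have wv: "w \<noteq> v" using h(1) src tot uwz vV uw by metis
    have zv: "z \<noteq> v" using h(2) src tot uwz vV wz by metis
    have uv: "u \<noteq> v" using zu src tot uwz vV uz by metis
    have L9: "LL M {v,u,w,z} = 9"
      using LL4[of v u w z M, OF _ Mz Msk] uw wz uz wv zv uv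
        Mv[OF uwz(1) uv] Mv[OF uwz(2) wv] Mv[OF uwz(3) zv] Mval[OF uwz(1,2) h(1)] Mval[OF uwz(2,3) h(2)]
        Mval[OF uwz(3,1) zu] Msk[of u z] by auto
    have c4: "card {v,u,w,z} = 4" using uw wz uz wv zv uv by auto
    have "\<not> V \<subseteq> {v,u,w,z}"
    proof
      assume "V \<subseteq> {v,u,w,z}"
      then have "card V \<le> 4" using card_mono[of "{v,u,w,z}" V] c4 by simp
      then show False using assms(2,3) by simp
    qed
    then obtain y where y: "y \<in> V" "y \<notin> {v,u,w,z}" by blast
    obtain a b c where abc: "distinct [a,b,c]" "{a,b,c} \<subseteq> {u,w,z,y}" "T' a b" "T' b c" "T' a c"
    proof -
      have tot4: "T' x y' \<longleftrightarrow> \<not> T' y' x" if "x \<in> {u,w,z,y}" "y' \<in> {u,w,z,y}" "x \<noteq> y'" for x y'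
        using tot[of x y'] that uwz y(1) by blast
      have "distinct [u,w,z,y]" using uw wz uz y(2) by auto
      then show ?thesis using triangle_trans[OF tot4 _ h zu] that by blast
    qed
    have abcV: "a \<in> V" "b \<in> V" "c \<in> V" using abc(2) uwz y by auto
    have abcv: "a \<noteq> v" "b \<noteq> v" "c \<noteq> v" using abc(2) uv wv zv y by auto
    have L1: "LL M {v,a,b,c} = 1"
      using LL4[of v a b c M, OF _ Mz Msk] abc(1) abcv
        Mv[OF abcV(1) abcv(1)] Mv[OF abcV(2) abcv(2)] Mv[OF abcV(3) abcv(3)]
        Mval[OF abcV(1,2) abc(3)] Mval[OF abcV(2,3) abc(4)] Mval[OF abcV(1,3) abc(5)] by auto
    have "LL M {v,u,w,z} = LL M {v,a,b,c}"
      by (rule LLc) (use uwz vV abcV uw wz uz wv zv uv abc(1) abcv in auto)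
    then show False using L9 L1 by simp
  qed
  have "transitive_tournament V T'"
    unfolding transitive_tournament_def using tour trans by blast
  then show "\<exists>T'. transitive_tournament V T' \<and> switching_equivalent V T T'" using se by blast
next
  assume "\<exists>T'. transitive_tournament V T' \<and> switching_equivalent V T T'"
  then obtain T' where tt: "transitive_tournament V T'" and se: "switching_equivalent V T T'"
    by blast
  from se obtain Y where eq: "\<forall>u\<in>V. \<forall>w\<in>V. T' u w = switch T Y u w"
    unfolding switching_equivalent_def by blast
  let ?C = "principal_charpoly (\<lambda>i j. (if i < j then 1 else 0) - (if j < i then 1 else 0)) {0..<k}"
  have C: "principal_charpoly (skew_adj T) X = ?C" if X: "X \<subseteq> V" "card X = k" for X
  proof -
    have "principal_charpoly (skew_adj T) X = principal_charpoly (skew_adj (switch T Y)) X"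
      by (rule charpoly_switch[symmetric])
    also have "\<dots> = principal_charpoly (skew_adj T') X"
    proof (rule charpoly_cong)
      fix i j assume ij: "i \<in> X" "j \<in> X"
      then have "T' i j = switch T Y i j" "T' j i = switch T Y j i" using eq X by blast+
      then show "skew_adj (switch T Y) i j = skew_adj T' i j" by (simp add: skew_adj_def)
    qed
    also have "\<dots> = ?C"
      by (rule transitive_charpoly_canon[OF tt X])
    finally show ?thesis .
  qed
  show "skew_spectrally_monomorphic k V T"
    unfolding skew_spectrally_monomorphic_def
  proof (intro allI impI)
    fix X Y assume "X \<subseteq> V" "Y \<subseteq> V" "card X = k" "card Y = k"
    then show "principal_charpoly (skew_adj T) X = principal_charpoly (skew_adj T) Y"
      using C by simp
  qed
qed

end
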